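(* Let $X$ and $Y$ be closed subsets of $\mathbb{R}^n$. If $X$, $Y$ and $X\cup Y$ are $\ell_1$-convex, then so is $X\cap Y$.
   Context: A subset $Z\subseteq\mathbb{R}^n$ is $\ell_1$-convex if for all $z,z'\in Z$, with $D=\sum_i|z_i-z'_i|$, there is $\gamma\colon[0,D]\to Z$ with $\gamma(0)=z,\gamma(D)=z'$ and $\sum_i|\gamma_i(t)-\gamma_i(t')|=|t-t'|$ for all $t,t'$. *)

theory Defs
  imports "HOL-Analysis.Analysis"
begin

definition l1_dist :: "real ^ 'n \<Rightarrow> real ^ 'n \<Rightarrow> real" where
  "l1_dist z z' = (\<Sum>i\<in>UNIV. \<bar>z $ i - z' $ i\<bar>)"

definition l1_convex :: "(real ^ 'n) set \<Rightarrow> bool" where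
  "l1_convex Z \<longleftrightarrow> (\<forall>z\<in>Z. \<forall>z'\<in>Z.
     \<exists>\<gamma> :: real \<Rightarrow> real ^ 'n.
        \<gamma> 0 = z \<and> \<gamma> (l1_dist z z') = z' \<and>
        (\<forall>t\<in>{0..l1_dist z z'}. \<gamma> t \<in> Z) \<and>
        (\<forall>t\<in>{0..l1_dist z z'}. \<forall>t'\<in>{0..l1_dist z z'}.
            l1_dist (\<gamma> t) (\<gamma> t') = \<bar>t - t'\<bar>))"

end

theory Submission
  imports Defs
begin


lemma l1_nonneg: "0 \<le> l1_dist x y"
  unfolding l1_dist_def by (simp add: sum_nonneg)

lemma l1_sym: "l1_dist x y = l1_dist y x"
  unfolding l1_dist_def by (simp add: abs_minus_commute)

lemma l1_tri: "l1_dist x z \<le> l1_dist x y + l1_dist y z"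
  unfolding l1_dist_def sum.distrib[symmetric]
  by (rule sum_mono) linarith

lemma l1_self[simp]: "l1_dist x x = 0"
  unfolding l1_dist_def by simp

lemma l1_comp: "\<bar>x $ i - y $ i\<bar> \<le> l1_dist x y"
  unfolding l1_dist_def by (rule member_le_sum) auto

lemma l1_zero: "l1_dist x y = 0 \<longleftrightarrow> x = y"
proof
  assume "l1_dist x y = 0"
  then have "\<forall>i. \<bar>x $ i - y $ i\<bar> = 0"
    unfolding l1_dist_def by (subst (asm) sum_nonneg_eq_0_iff) auto
  then show "x = y" by (simp add: vec_eq_iff)
qed simp

lemma dist_le_l1: "dist x y \<le> l1_dist x y"
  unfolding l1_dist_def dist_norm
  using norm_le_l1_cart[of "x - y"] by simp

lemma l1_cont: "continuous_on UNIV (\<lambda>x. l1_dist (f x) (g x))"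
  if "continuous_on UNIV f" "continuous_on UNIV g"
  unfolding l1_dist_def using that by (intro continuous_intros)

lemma l1_between_iff:
  "l1_dist a x + l1_dist x b = l1_dist a b \<longleftrightarrow> (\<forall>i. \<bar>a$i - x$i\<bar> + \<bar>x$i - b$i\<bar> = \<bar>a$i - b$i\<bar>)"
proof -
  have "l1_dist a x + l1_dist x b - l1_dist a b = (\<Sum>i\<in>UNIV. \<bar>a$i - x$i\<bar> + \<bar>x$i - b$i\<bar> - \<bar>a$i - b$i\<bar>)"
    unfolding l1_dist_def by (simp add: sum.distrib sum_subtractf)
  moreover have "(\<Sum>i\<in>UNIV. \<bar>a$i - x$i\<bar> + \<bar>x$i - b$i\<bar> - \<bar>a$i - b$i\<bar>) = 0 \<longleftrightarrow>
     (\<forall>i\<in>UNIV. \<bar>a$i - x$i\<bar> + \<bar>x$i - b$i\<bar> - \<bar>a$i - b$i\<bar> = 0)"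
    by (rule sum_nonneg_eq_0_iff) auto
  ultimately show ?thesis by auto
qed


lemma menger:
  fixes Z :: "(real^'n) set"
  assumes clZ: "closed Z"
    and BT: "\<And>a b. a\<in>Z \<Longrightarrow> b\<in>Z \<Longrightarrow> a\<noteq>b \<Longrightarrow> \<exists>x\<in>Z. x\<noteq>a \<and> x\<noteq>b \<and> l1_dist a x + l1_dist x b = l1_dist a b"
    and vZ: "v \<in> Z" and wZ: "w \<in> Z"
  shows "\<exists>\<gamma>. \<gamma> 0 = v \<and> \<gamma> (l1_dist v w) = w \<and> (\<forall>t\<in>{0..l1_dist v w}. \<gamma> t \<in> Z) \<and>
     (\<forall>t\<in>{0..l1_dist v w}. \<forall>t'\<in>{0..l1_dist v w}. l1_dist (\<gamma> t) (\<gamma> t') = \<bar>t - t'\<bar>)"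
proof -
  define D where "D = l1_dist v w"
  define g where "g x = l1_dist v x" for x
  define le where "le x y \<longleftrightarrow> l1_dist v x + l1_dist x y + l1_dist y w = D" for x y
  have trans: "le x z" if "le x y" "le y z" for x y z
  proof -
    have a: "D \<le> l1_dist v y + l1_dist y w" "D \<le> l1_dist v z + l1_dist z w"
      "D \<le> l1_dist v x + l1_dist x w"
      using l1_tri[of v w] unfolding D_def by auto
    have b: "l1_dist v y \<le> l1_dist v x + l1_dist x y" "l1_dist x z \<le> l1_dist x y + l1_dist y z"
      "l1_dist y w \<le> l1_dist y z + l1_dist z w"
      by (auto intro: l1_tri)
    have c: "D \<le> l1_dist v x + l1_dist x z + l1_dist z w"
      using l1_tri[of v z x] l1_tri[of v w z] unfolding D_def by linarith
    from that a b c show ?thesis unfolding le_def by linarith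
  qed
  have le_dist: "l1_dist x y = g y - g x" if "le x y" for x y
  proof -
    have "D \<le> l1_dist v y + l1_dist y w" using l1_tri[of v w y] unfolding D_def .
    moreover have "l1_dist v y \<le> l1_dist v x + l1_dist x y" by (rule l1_tri)
    ultimately show ?thesis using that unfolding le_def g_def by linarith
  qed
  have le_vx: "le v x" if "le x x" for x using that unfolding le_def by simp
  have le_vw: "le v w" unfolding le_def D_def by simp
  have le_vv: "le v v" unfolding le_def D_def by simp
  have le_ww: "le w w" unfolding le_def D_def by (simp add: l1_sym)
  define A where "A = {M. v \<in> M \<and> w \<in> M \<and> M \<subseteq> Z \<and> (\<forall>x\<in>M. \<forall>y\<in>M. le x y \<or> le y x)}"
  have vwA: "{v,w} \<in> A" unfolding A_def using vZ wZ le_vw le_ww le_vv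
    by auto
  have "\<exists>M\<in>A. \<forall>X\<in>A. M \<subseteq> X \<longrightarrow> X = M"
  proof (rule subset_Zorn)
    fix C assume C: "subset.chain A C"
    show "\<exists>U\<in>A. \<forall>X\<in>C. X \<subseteq> U"
    proof (cases "C = {}")
      case True then show ?thesis using vwA by auto
    next
      case False
      have "\<Union>C \<in> A"
      proof -
        have "\<forall>x\<in>\<Union>C. \<forall>y\<in>\<Union>C. le x y \<or> le y x"
        proof (intro ballI)
          fix x y assume "x \<in> \<Union>C" "y \<in> \<Union>C"
          then obtain X Y where "X \<in> C" "Y \<in> C" "x \<in> X" "y \<in> Y" by auto
          moreover have "X \<subseteq> Y \<or> Y \<subseteq> X" using C \<open>X\<in>C\<close> \<open>Y\<in>C\<close> unfolding subset.chain_def by auto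
          moreover have "X \<in> A" "Y \<in> A" using C \<open>X\<in>C\<close> \<open>Y\<in>C\<close> unfolding subset.chain_def by auto
          ultimately show "le x y \<or> le y x" unfolding A_def by blast
        qed
        moreover obtain X where "X \<in> C" using False by auto
        moreover have "C \<subseteq> A" using C unfolding subset.chain_def by auto
        ultimately show ?thesis unfolding A_def by blast
      qed
      then show ?thesis by auto
    qed
  qed
  then obtain M where MA: "M \<in> A" and Mmax: "\<And>X. X \<in> A \<Longrightarrow> M \<subseteq> X \<Longrightarrow> X = M" by blast
  have contg: "continuous_on UNIV (\<lambda>x. l1_dist x a)" "continuous_on UNIV (\<lambda>x. l1_dist a x)" for a
    by (auto intro!: l1_cont continuous_intros)
  have cl_le: "closed {x. le x a \<or> le a x}" for a
    unfolding le_def Collect_disj_eq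
    by (intro closed_Un closed_Collect_eq continuous_intros l1_cont)
  have Mcl: "closure M \<in> A"
  proof -
    have s1: "closure M \<subseteq> {x. le x a \<or> le a x}" if "a \<in> M" for a
      using MA that unfolding A_def by (intro closure_minimal cl_le) auto
    have "closure M \<subseteq> {x. le x a \<or> le a x}" if "a \<in> closure M" for a
      using s1 that by (intro closure_minimal cl_le) auto
    moreover have "closure M \<subseteq> Z" using MA clZ unfolding A_def by (intro closure_minimal) auto
    ultimately show ?thesis using MA closure_subset[of M] unfolding A_def by auto
  qed
  have Mclosed: "closed M" using Mmax[OF Mcl closure_subset] by (metis closed_closure)
  have MZ: "M \<subseteq> Z" and vM: "v \<in> M" and wM: "w \<in> M" and Mch: "\<And>x y. x\<in>M \<Longrightarrow> y\<in>M \<Longrightarrow> le x y \<or> le y x"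
    using MA unfolding A_def by auto
  have lexx: "le x x" if "x \<in> M" for x using Mch[OF that that] by auto
  have gD: "g x \<le> D" "0 \<le> g x" if "x \<in> M" for x
    using lexx[OF that] l1_nonneg[of x x] l1_nonneg[of x w] l1_nonneg[of v x] unfolding le_def g_def by auto
  have Mbd: "bounded M"
    unfolding bounded_def
    using gD dist_le_l1[of v] unfolding g_def by (intro exI[of _ v] exI[of _ D] ballI) (meson order_trans)
  have uniq: "x = y" if "x \<in> M" "y \<in> M" "g x = g y" for x y
    using Mch[OF that(1,2)] le_dist[of x y] le_dist[of y x] that(3) l1_zero by auto
  have gv: "g v = 0" unfolding g_def by simp
  have gw: "g w = D" unfolding g_def D_def by simp
  have levels: "\<exists>m\<in>M. g m = c" if c: "0 \<le> c" "c \<le> D" for c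
  proof (rule ccontr)
    assume nc: "\<not> (\<exists>m\<in>M. g m = c)"
    have contgg: "continuous_on S g" for S
      unfolding g_def by (rule continuous_on_subset[OF contg(2)]) auto
    have c1: "closed {x. g x \<le> c}" unfolding g_def
      by (rule closed_Collect_le[OF contg(2) continuous_on_const])
    have c2: "closed {x. c \<le> g x}" unfolding g_def
      by (rule closed_Collect_le[OF continuous_on_const contg(2)])
    have cL: "compact (M \<inter> {x. g x \<le> c})"
      unfolding compact_eq_bounded_closed
      using closed_Int[OF Mclosed c1] bounded_subset[OF Mbd, of "M \<inter> {x. g x \<le> c}"] by blast
    have cU: "compact (M \<inter> {x. c \<le> g x})"
      unfolding compact_eq_bounded_closed
      using closed_Int[OF Mclosed c2] bounded_subset[OF Mbd, of "M \<inter> {x. c \<le> g x}"] by blast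
    have neL: "M \<inter> {x. g x \<le> c} \<noteq> {}" using vM gv c by auto
    obtain l where l0: "l \<in> M \<inter> {x. g x \<le> c}" and lmax0: "\<forall>y\<in>M \<inter> {x. g x \<le> c}. g y \<le> g l"
      using continuous_attains_sup[OF cL neL contgg] by meson
    have l: "l \<in> M" "g l \<le> c" using l0 by auto
    have lmax: "\<And>x. x\<in>M \<Longrightarrow> g x \<le> c \<Longrightarrow> g x \<le> g l" using lmax0 by auto
    have neU: "M \<inter> {x. c \<le> g x} \<noteq> {}" using wM gw c by auto
    obtain u where u0: "u \<in> M \<inter> {x. c \<le> g x}" and umin0: "\<forall>y\<in>M \<inter> {x. c \<le> g x}. g u \<le> g y"
      using continuous_attains_inf[OF cU neU contgg] by meson
    have u: "u \<in> M" "c \<le> g u" using u0 by auto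
    have umin: "\<And>x. x\<in>M \<Longrightarrow> c \<le> g x \<Longrightarrow> g u \<le> g x" using umin0 by auto
    have "g l \<noteq> c" using l nc by blast
    then have gl: "g l < c" using l by linarith
    have "g u \<noteq> c" using u nc by blast
    then have gu: "c < g u" using u by linarith
    have "\<not> le u l"
    proof
      assume "le u l"
      then have "l1_dist u l = g l - g u" by (rule le_dist)
      then show False using l1_nonneg[of u l] gl gu by linarith
    qed
    then have lu: "le l u" using Mch[OF l(1) u(1)] by blast
    have "l \<noteq> u" using gl gu by auto
    then obtain x where x: "x \<in> Z" "x \<noteq> l" "x \<noteq> u" "l1_dist l x + l1_dist x u = l1_dist l u"
      using BT[of l u] MZ l u by auto
    have lx: "le l x" and xu: "le x u"
    proof -
      have "D \<le> l1_dist v l + l1_dist l x + l1_dist x w"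
        using l1_tri[of v x l] l1_tri[of v w x] unfolding D_def by linarith
      moreover have "l1_dist x w \<le> l1_dist x u + l1_dist u w" by (rule l1_tri)
      ultimately show "le l x" using lu x(4) unfolding le_def by linarith
      have "D \<le> l1_dist v x + l1_dist x u + l1_dist u w"
        using l1_tri[of v u x] l1_tri[of v w u] unfolding D_def by linarith
      moreover have "l1_dist v x \<le> l1_dist v l + l1_dist l x" by (rule l1_tri)
      ultimately show "le x u" using lu x(4) unfolding le_def by linarith
    qed
    have glx: "g l < g x" using le_dist[OF lx] x(2) l1_zero[of l x] l1_nonneg[of l x] by auto
    have gxu: "g x < g u" using le_dist[OF xu] x(3) l1_zero[of x u] l1_nonneg[of x u] by auto
    have xM: "x \<notin> M"
    proof
      assume "x \<in> M"
      then show False using lmax[of x] umin[of x] glx gxu by linarith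
    qed
    have "insert x M \<in> A"
    proof -
      have "le m x \<or> le x m" if "m \<in> M" for m
      proof (cases "g m \<le> c")
        case True
        then have "g m \<le> g l" using lmax that by auto
        then have "le m l" using Mch[OF that l(1)] le_dist[of l m] l1_zero[of l m] l1_nonneg[of l m] lexx[OF l(1)]
          by (cases "le m l") auto
        then show ?thesis using trans lx by blast
      next
        case False
        then have "g u \<le> g m" using umin that by auto
        then have "le u m" using Mch[OF that u(1)] le_dist[of m u] l1_zero[of m u] l1_nonneg[of m u] lexx[OF u(1)]
          by (cases "le u m") auto
        then show ?thesis using trans xu by blast
      qed
      moreover have "le x x"
      proof -
        have "D \<le> l1_dist v x + l1_dist x w" using l1_tri[of v w x] unfolding D_def .
        then show ?thesis using lx l1_tri[of v x l] unfolding le_def l1_self by linarith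
      qed
      ultimately show ?thesis using MA x(1) unfolding A_def by auto
    qed
    then show False using Mmax[of "insert x M"] xM by auto
  qed
  define \<gamma> where "\<gamma> t = (SOME m. m \<in> M \<and> g m = t)" for t
  have \<gamma>: "\<gamma> t \<in> M \<and> g (\<gamma> t) = t" if "t \<in> {0..D}" for t
  proof -
    have "\<exists>m. m \<in> M \<and> g m = t" using levels[of t] that by auto
    then show ?thesis unfolding \<gamma>_def by (rule someI_ex)
  qed
  have "\<gamma> 0 = v" using \<gamma>[of 0] uniq[of "\<gamma> 0" v] vM gv gD[OF wM] by auto
  moreover have "\<gamma> D = w" using \<gamma>[of D] uniq[of "\<gamma> D" w] wM gw gD[OF wM] by auto
  moreover have "\<forall>t\<in>{0..D}. \<gamma> t \<in> Z" using \<gamma> MZ by auto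
  moreover have "\<forall>t\<in>{0..D}. \<forall>t'\<in>{0..D}. l1_dist (\<gamma> t) (\<gamma> t') = \<bar>t - t'\<bar>"
  proof (intro ballI)
    fix t t' assume "t \<in> {0..D}" "t' \<in> {0..D}"
    then show "l1_dist (\<gamma> t) (\<gamma> t') = \<bar>t - t'\<bar>"
      using \<gamma>[of t] \<gamma>[of t'] Mch[of "\<gamma> t" "\<gamma> t'"] le_dist[of "\<gamma> t" "\<gamma> t'"] le_dist[of "\<gamma> t'" "\<gamma> t"]
        l1_sym[of "\<gamma> t" "\<gamma> t'"] l1_nonneg[of "\<gamma> t" "\<gamma> t'"] by auto
  qed
  ultimately show ?thesis unfolding D_def by blast
qed



lemma arith1:
  fixes a b p q :: real
  assumes "\<bar>a-p\<bar>+\<bar>p-b\<bar> = \<bar>a-b\<bar>" "\<bar>a-q\<bar>+\<bar>q-b\<bar> = \<bar>a-b\<bar>" "\<bar>p-a\<bar>+\<bar>a-q\<bar> = \<bar>p-q\<bar>"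
    "p \<noteq> a" "\<bar>q-b\<bar> < \<bar>a-b\<bar>"
  shows False
  using assms by (auto simp: abs_if split: if_splits)

lemma arith2:
  fixes a b p q u :: real
  assumes "\<bar>a-p\<bar>+\<bar>p-b\<bar> = \<bar>a-b\<bar>" "\<bar>a-q\<bar>+\<bar>q-b\<bar> = \<bar>a-b\<bar>" "\<bar>p-u\<bar>+\<bar>u-q\<bar> = \<bar>p-q\<bar>"
  shows "\<bar>a-u\<bar>+\<bar>u-b\<bar> = \<bar>a-b\<bar>"
  using assms by (auto simp: abs_if split: if_splits)

lemma geo_cont:
  assumes "\<forall>t\<in>S. \<forall>t'\<in>S. l1_dist (\<sigma> t) (\<sigma> t') = \<bar>t - t'\<bar>"
  shows "continuous_on S \<sigma>"
  unfolding continuous_on_iff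
proof (intro ballI allI impI)
  fix x e assume x: "x \<in> S" and e: "(0::real) < e"
  show "\<exists>d>0. \<forall>x'\<in>S. dist x' x < d \<longrightarrow> dist (\<sigma> x') (\<sigma> x) < e"
  proof (intro exI[of _ e] conjI ballI impI)
    fix x' assume "x' \<in> S" "dist x' x < e"
    then show "dist (\<sigma> x') (\<sigma> x) < e"
      using assms x dist_le_l1[of "\<sigma> x'" "\<sigma> x"] by (auto simp: dist_real_def)
  qed (rule e)
qed


lemma geo_facts:
  assumes "\<gamma> 0 = a" "\<gamma> (l1_dist a b) = b"
    and "\<forall>t\<in>{0..l1_dist a b}. \<forall>t'\<in>{0..l1_dist a b}. l1_dist (\<gamma> t) (\<gamma> t') = \<bar>t - t'\<bar>"
    and "t \<in> {0..l1_dist a b}"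
  shows "l1_dist a (\<gamma> t) = t" "l1_dist (\<gamma> t) b = l1_dist a b - t"
proof -
  have "0 \<in> {0..l1_dist a b}" using l1_nonneg[of a b] by auto
  moreover have "l1_dist a b \<in> {0..l1_dist a b}" using l1_nonneg[of a b] by auto
  ultimately show "l1_dist a (\<gamma> t) = t" "l1_dist (\<gamma> t) b = l1_dist a b - t"
    using assms by (metis abs_of_nonneg atLeastAtMost_iff diff_ge_0_iff_ge diff_zero abs_minus_commute)+
qed

lemma between_XY:
  fixes X Y :: "(real ^ 'n) set"
  assumes clX: "closed X" and clY: "closed Y"
    and cX: "l1_convex X" and cY: "l1_convex Y" and cXY: "l1_convex (X \<union> Y)"
    and aXY: "a \<in> X \<inter> Y" and bXY: "b \<in> X \<inter> Y" and ab: "a \<noteq> b"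
  shows "\<exists>x\<in>X \<inter> Y. x \<noteq> a \<and> x \<noteq> b \<and> l1_dist a x + l1_dist x b = l1_dist a b"
proof (rule ccontr)
  assume "\<not> ?thesis"
  then have H: "\<And>x. x \<in> X \<inter> Y \<Longrightarrow> l1_dist a x + l1_dist x b = l1_dist a b \<Longrightarrow> x = a \<or> x = b"
    by blast
  define E where "E = l1_dist a b"
  define S where "S = {\<bar>a$i - b$i\<bar> | i. a$i \<noteq> b$i}"
  have finS: "finite S" unfolding S_def by simp
  obtain i0 where i0: "a$i0 \<noteq> b$i0" using ab by (auto simp: vec_eq_iff)
  have neS: "S \<noteq> {}" unfolding S_def using i0 by auto
  define \<epsilon> where "\<epsilon> = Min S"
  have epsle: "\<epsilon> \<le> \<bar>a$i - b$i\<bar>" if "a$i \<noteq> b$i" for i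
    unfolding \<epsilon>_def using finS that by (intro Min_le) (auto simp: S_def)
  have epspos: "\<epsilon> > 0"
    unfolding \<epsilon>_def using finS neS by (subst Min_gr_iff) (auto simp: S_def)
  have epsE: "\<epsilon> \<le> E" using epsle[OF i0] l1_comp[of a i0 b] unfolding E_def by linarith
  obtain \<gamma> where g0: "\<gamma> 0 = a" and gE: "\<gamma> E = b" and gX: "\<forall>t\<in>{0..E}. \<gamma> t \<in> X"
    and giso: "\<forall>t\<in>{0..E}. \<forall>t'\<in>{0..E}. l1_dist (\<gamma> t) (\<gamma> t') = \<bar>t - t'\<bar>"
    using cX aXY bXY unfolding l1_convex_def E_def by blast
  obtain \<delta> where d0: "\<delta> 0 = a" and dE: "\<delta> E = b" and dY: "\<forall>t\<in>{0..E}. \<delta> t \<in> Y"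
    and diso: "\<forall>t\<in>{0..E}. \<forall>t'\<in>{0..E}. l1_dist (\<delta> t) (\<delta> t') = \<bar>t - t'\<bar>"
    using cY aXY bXY unfolding l1_convex_def E_def by blast
  define p where "p = \<gamma> (\<epsilon>/2)"
  define q where "q = \<delta> (E - \<epsilon>/2)"
  have t1: "\<epsilon>/2 \<in> {0..E}" "E - \<epsilon>/2 \<in> {0..E}" using epspos epsE by auto
  have pX: "p \<in> X" using gX t1 unfolding p_def by auto
  have qY: "q \<in> Y" using dY t1 unfolding q_def by auto
  have dap: "l1_dist a p = \<epsilon>/2" and dpb: "l1_dist p b = E - \<epsilon>/2"
    using geo_facts[of \<gamma> a b "\<epsilon>/2"] g0 gE giso t1 unfolding p_def E_def by auto
  have daq: "l1_dist a q = E - \<epsilon>/2" and dqb: "l1_dist q b = \<epsilon>/2"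
    using geo_facts[of \<delta> a b "E - \<epsilon>/2"] d0 dE diso t1 unfolding q_def E_def by auto
  have bp: "l1_dist a p + l1_dist p b = l1_dist a b" using dap dpb unfolding E_def by simp
  have bq: "l1_dist a q + l1_dist q b = l1_dist a b" using daq dqb unfolding E_def by simp
  have pa: "p \<noteq> a" using dap epspos l1_zero[of a p] by auto
  have pb: "p \<noteq> b" using dpb epspos epsE l1_zero[of p b] by auto
  have qa: "q \<noteq> a" using daq epspos epsE l1_zero[of a q] by auto
  have qb: "q \<noteq> b" using dqb epspos l1_zero[of q b] by auto
  have pnY: "p \<notin> Y" using H[of p] pX bp pa pb by auto
  have qnX: "q \<notin> X" using H[of q] qY bq qa qb by auto
  define L where "L = l1_dist p q"
  obtain \<sigma> where s0: "\<sigma> 0 = p" and sL: "\<sigma> L = q" and sXY: "\<forall>t\<in>{0..L}. \<sigma> t \<in> X \<union> Y"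
    and siso: "\<forall>t\<in>{0..L}. \<forall>t'\<in>{0..L}. l1_dist (\<sigma> t) (\<sigma> t') = \<bar>t - t'\<bar>"
    using cXY pX qY unfolding l1_convex_def L_def by blast
  have Lnn: "0 \<le> L" unfolding L_def by (rule l1_nonneg)
  have conn: "connected (\<sigma> ` {0..L})"
    by (rule connected_continuous_image[OF geo_cont[OF siso]]) simp
  have "X \<inter> Y \<inter> \<sigma> ` {0..L} \<noteq> {}"
  proof
    assume emp: "X \<inter> Y \<inter> \<sigma> ` {0..L} = {}"
    have "\<sigma> ` {0..L} \<subseteq> X \<union> Y" using sXY by auto
    moreover have "X \<inter> \<sigma> ` {0..L} \<noteq> {}" using s0 pX Lnn by force
    moreover have "Y \<inter> \<sigma> ` {0..L} \<noteq> {}" using sL qY Lnn by force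
    ultimately show False using conn emp clX clY unfolding connected_closed by blast
  qed
  then obtain s where s: "s \<in> {0..L}" and uXY: "\<sigma> s \<in> X \<inter> Y" by blast
  define u where "u = \<sigma> s"
  have dpu: "l1_dist p u = s" and duq: "l1_dist u q = L - s"
    using geo_facts[of \<sigma> p q s] s0 sL siso s unfolding u_def L_def by auto
  have bu: "l1_dist p u + l1_dist u q = l1_dist p q" using dpu duq unfolding L_def by simp
  have cp: "\<bar>a$i - p$i\<bar> + \<bar>p$i - b$i\<bar> = \<bar>a$i - b$i\<bar>" for i using bp l1_between_iff by blast
  have cq: "\<bar>a$i - q$i\<bar> + \<bar>q$i - b$i\<bar> = \<bar>a$i - b$i\<bar>" for i using bq l1_between_iff by blast
  have cu: "\<bar>p$i - u$i\<bar> + \<bar>u$i - q$i\<bar> = \<bar>p$i - q$i\<bar>" for i using bu l1_between_iff by blast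
  have "\<bar>a$i - u$i\<bar> + \<bar>u$i - b$i\<bar> = \<bar>a$i - b$i\<bar>" for i using arith2[OF cp cq cu] .
  then have "l1_dist a u + l1_dist u b = l1_dist a b" using l1_between_iff by blast
  then have "u = a \<or> u = b" using H uXY unfolding u_def by blast
  then show False
  proof
    assume ua: "u = a"
    obtain i where pi: "p$i \<noteq> a$i" using pa by (auto simp: vec_eq_iff)
    have abi: "a$i \<noteq> b$i" using cp[of i] pi by auto
    have "\<bar>q$i - b$i\<bar> \<le> \<epsilon>/2" using l1_comp[of q i b] dqb by simp
    then have "\<bar>q$i - b$i\<bar> < \<bar>a$i - b$i\<bar>" using epsle[OF abi] epspos by linarith
    then show False using arith1[OF cp[of i] cq[of i] _ pi] cu[of i] ua by simp
  next
    assume ub: "u = b"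
    obtain i where qi: "q$i \<noteq> b$i" using qb by (auto simp: vec_eq_iff)
    have abi: "a$i \<noteq> b$i" using cq[of i] qi by auto
    have "\<bar>p$i - a$i\<bar> \<le> \<epsilon>/2" using l1_comp[of p i a] dap l1_sym[of a p] by simp
    then have lt: "\<bar>p$i - a$i\<bar> < \<bar>b$i - a$i\<bar>" using epsle[OF abi] epspos by (simp add: abs_minus_commute)
    have c1: "\<bar>b$i - q$i\<bar> + \<bar>q$i - a$i\<bar> = \<bar>b$i - a$i\<bar>" using cq[of i] by (simp add: abs_minus_commute)
    have c2: "\<bar>b$i - p$i\<bar> + \<bar>p$i - a$i\<bar> = \<bar>b$i - a$i\<bar>" using cp[of i] by (simp add: abs_minus_commute)
    have c3: "\<bar>q$i - b$i\<bar> + \<bar>b$i - p$i\<bar> = \<bar>q$i - p$i\<bar>" using cu[of i] ub by (simp add: abs_minus_commute)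
    show False using arith1[OF c1 c2 c3 qi lt] .
  qed
qed

theorem lemma1p13:
  fixes X Y :: "(real ^ 'n) set"
  assumes "closed X" and "closed Y"
    and "l1_convex X" and "l1_convex Y" and "l1_convex (X \<union> Y)"
  shows "l1_convex (X \<inter> Y)"
  unfolding l1_convex_def
proof (intro ballI)
  fix z z' assume "z \<in> X \<inter> Y" "z' \<in> X \<inter> Y"
  then show "\<exists>\<gamma>. \<gamma> 0 = z \<and> \<gamma> (l1_dist z z') = z' \<and> (\<forall>t\<in>{0..l1_dist z z'}. \<gamma> t \<in> X \<inter> Y) \<and>
        (\<forall>t\<in>{0..l1_dist z z'}. \<forall>t'\<in>{0..l1_dist z z'}. l1_dist (\<gamma> t) (\<gamma> t') = \<bar>t - t'\<bar>)"
    using menger[of "X \<inter> Y" z z'] between_XY[OF assms] assms(1,2) by blast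
qed

end
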